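(* Let $N\ge 2$ and let $g$ be a probability density on ${\mathbb S}^1$ with $g(w)=g(w^* )$ for all $w$. Consider the BDG jump process on ${\mathbb T}_N=({\mathbb S}^1)^N$: at each jump a pair $i<j$ is chosen uniformly among the $\binom N2$ pairs and $(v_i,v_j)$ is replaced by $(W_i\overline v_{i,j},W_j\overline v_{i,j})$, where $\overline v_{i,j}=(v_i+v_j)/|v_i+v_j|$ and $W_i,W_j$ are independent with density $g$, all other velocities unchanged. Let $Q$ be its Markov transition operator, $Q\varphi(\vec v)=\mathrm E\{\varphi(\vec V_{k+1})\mid \vec V_k=\vec v\}$. Then the adjoint $Q^*$ of $Q$ in $L^2({\mathbb T}_N,{\rm d}^Nv)$ is $Q^*=\binom N2^{-1}\sum_{i<j}Q^*_{(i,j)}$, where $$Q^*_{(i,j)}F(\vec v)=\int_{{\mathbb T}_2}F(v_1,\dots,y_i,\dots,y_j,\dots,v_N)\,g(v_i\overline y_{i,j}^* )\,g(v_j\overline y_{i,j}^* )\,{\rm d}y_i\,{\rm d}y_j,\qquad \overline y_{i,j}=\frac{y_i+y_j}{|y_i+y_j|},$$ and consequently the master equation of the BDG dynamics is $\frac{d}{dt}F=L^*F$ with $$L^*=N\binom N2^{-1}\sum_{i<j}\big(Q^*_{(i,j)}-I\big).$$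
   Context: ${\mathbb S}^1$ is the unit circle in the complex plane, with products of velocities meaning complex multiplication and $w^*$ the complex conjugate; ${\rm d}v$ is the uniform (normalized) measure on ${\mathbb S}^1$ and ${\rm d}^Nv$ its $N$-fold product. Probability densities on ${\mathbb T}_N$ are taken with respect to ${\rm d}^Nv$. The time-continuous master equation associated with a discrete-time Markov chain with transition operator $Q$ is, by definition, $\frac{d}{dt}F(\vec v,t)=L^*F(\vec v,t)$, $F(\cdot,0)=F_0$, where $L^*=N(Q^*-I)$ with $Q^*$ the $L^2({\mathbb T}_N)$-adjoint of $Q$ (so that the density of $\vec V_{k+1}$ is $Q^*$ applied to the density of $\vec V_k$). *)

theory Defs
  imports "HOL-Probability.Probability"
begin

definition circle_measure :: "complex measure" where
  "circle_measure = distr (restrict_space lborel {0..<1})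
      (restrict_space borel (sphere 0 1)) (\<lambda>t. cis (2 * pi * t))"

definition torus :: "nat \<Rightarrow> (nat \<Rightarrow> complex) measure" where
  "torus N = PiM {..<N} (\<lambda>_. circle_measure)"

text \<open>Normalized direction (z/|z|); the null case z = 0 (a null set) is fixed to 1.\<close>
definition cdir :: "complex \<Rightarrow> complex" where
  "cdir z = (if z = 0 then 1 else z / complex_of_real (cmod z))"

definition pairs :: "nat \<Rightarrow> (nat \<times> nat) set" where
  "pairs N = {(i, j). i < j \<and> j < N}"

definition BDG_Q :: "nat \<Rightarrow> (complex \<Rightarrow> real) \<Rightarrow> ((nat \<Rightarrow> complex) \<Rightarrow> real)
    \<Rightarrow> (nat \<Rightarrow> complex) \<Rightarrow> real" where
  "BDG_Q N g \<phi> v = (1 / real (N choose 2)) *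
     (\<Sum>(i, j)\<in>pairs N.
        \<integral>w. \<phi> (v(i := fst w * cdir (v i + v j), j := snd w * cdir (v i + v j)))
          \<partial>(density circle_measure (\<lambda>x. ennreal (g x)) \<Otimes>\<^sub>M density circle_measure (\<lambda>x. ennreal (g x))))"

definition Qstar_pair :: "(complex \<Rightarrow> real) \<Rightarrow> nat \<Rightarrow> nat \<Rightarrow> ((nat \<Rightarrow> complex) \<Rightarrow> real)
    \<Rightarrow> (nat \<Rightarrow> complex) \<Rightarrow> real" where
  "Qstar_pair g i j F v =
     (\<integral>y. F (v(i := fst y, j := snd y))
           * g (v i * cnj (cdir (fst y + snd y)))
           * g (v j * cnj (cdir (fst y + snd y)))
        \<partial>(circle_measure \<Otimes>\<^sub>M circle_measure))"

definition is_adjoint_on :: "(nat \<Rightarrow> complex) measure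
    \<Rightarrow> (((nat \<Rightarrow> complex) \<Rightarrow> real) \<Rightarrow> (nat \<Rightarrow> complex) \<Rightarrow> real)
    \<Rightarrow> (((nat \<Rightarrow> complex) \<Rightarrow> real) \<Rightarrow> (nat \<Rightarrow> complex) \<Rightarrow> real) \<Rightarrow> bool" where
  "is_adjoint_on M Q Qs \<longleftrightarrow>
     (\<forall>\<phi> F. \<phi> \<in> borel_measurable M \<longrightarrow> F \<in> borel_measurable M \<longrightarrow>
        (\<exists>B. \<forall>v\<in>space M. \<bar>\<phi> v\<bar> \<le> B) \<longrightarrow> (\<exists>B. \<forall>v\<in>space M. \<bar>F v\<bar> \<le> B) \<longrightarrow>
        (\<integral>v. Q \<phi> v * F v \<partial>M) = (\<integral>v. \<phi> v * Qs F v \<partial>M))"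

definition master_generator :: "nat \<Rightarrow> (((nat \<Rightarrow> complex) \<Rightarrow> real) \<Rightarrow> (nat \<Rightarrow> complex) \<Rightarrow> real)
    \<Rightarrow> ((nat \<Rightarrow> complex) \<Rightarrow> real) \<Rightarrow> (nat \<Rightarrow> complex) \<Rightarrow> real" where
  "master_generator N Qs F v = real N * (Qs F v - F v)"

end

theory Submission
  imports Defs
begin


lemma cis_meas: "(\<lambda>t::real. cis (2 * pi * t)) \<in> measurable (restrict_space lborel {0..<1}) (restrict_space borel (sphere (0::complex) 1))"
  proof (rule measurable_restrict_space2)
  have "continuous_on UNIV (\<lambda>t::real. cis (2 * pi * t))"
    unfolding cis_conv_exp by (intro continuous_intros)
  then show "(\<lambda>t::real. cis (2 * pi * t)) \<in> borel_measurable (restrict_space lborel {0..<1})"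
    by (intro measurable_restrict_space1) (simp add: borel_measurable_continuous_onI)
qed (auto simp: space_restrict_space)

lemma space_C: "space circle_measure = sphere 0 1"
  by (simp add: circle_measure_def space_restrict_space)

lemma sets_C: "sets circle_measure = sets (restrict_space borel (sphere 0 1))"
  by (simp add: circle_measure_def)

lemma measurable_C_iff: "f \<in> measurable X circle_measure \<longleftrightarrow> f \<in> borel_measurable X \<and> f \<in> space X \<rightarrow> sphere 0 1"
  by (simp add: measurable_cong_sets[OF refl sets_C] measurable_restrict_space2_iff)

lemma measurable_from_C: "f \<in> borel_measurable (restrict_space borel (sphere 0 1)) \<Longrightarrow> f \<in> borel_measurable circle_measure"
  by (simp add: measurable_cong_sets[OF sets_C refl])

lemma sphere_in_sets: "sphere (0::complex) 1 \<in> sets (restrict_space borel (sphere 0 1))"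
  using sets.top[of "restrict_space borel (sphere (0::complex) 1)"] by (simp add: space_restrict_space)

lemma prob_C: "prob_space circle_measure"
proof
  have "emeasure circle_measure (space circle_measure) = emeasure (restrict_space lborel {0..<1::real}) ((\<lambda>t. cis (2*pi*t)) -` sphere 0 1 \<inter> space (restrict_space lborel {0..<1::real}))"
    unfolding circle_measure_def by (subst emeasure_distr[OF cis_meas]) (auto simp: space_restrict_space sphere_in_sets)
  also have "\<dots> = emeasure (restrict_space lborel {0..<1::real}) {0..<1}"
    by (auto intro!: arg_cong2[where f=emeasure] simp: space_restrict_space)
  also have "\<dots> = 1" by (simp add: emeasure_restrict_space)
  finally show "emeasure circle_measure (space circle_measure) = 1" .
qed




lemma periodic_shift:
  fixes h :: "real \<Rightarrow> ennreal" and s :: real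
  assumes hm[measurable]: "h \<in> borel_measurable borel" and per: "\<And>t. h (t + 1) = h t"
    and s: "0 \<le> s" "s \<le> 1"
  shows "(\<integral>\<^sup>+t. h (t + s) * indicator {0..<1} t \<partial>lborel) = (\<integral>\<^sup>+t. h t * indicator {0..<1} t \<partial>lborel)"
proof -
  have "(\<integral>\<^sup>+u. h u * indicator {s..<1+s} u \<partial>lborel) = (\<integral>\<^sup>+t. h (s + 1 * t) * indicator {s..<1+s} (s + 1 * t) \<partial>lborel)"
    using nn_integral_real_affine[of "\<lambda>u. h u * indicator {s..<1+s} u" 1 s] by simp
  also have "\<dots> = (\<integral>\<^sup>+t. h (t + s) * indicator {0..<1} t \<partial>lborel)"
    by (intro nn_integral_cong) (auto simp: indicator_def add.commute)
  finally have 1: "(\<integral>\<^sup>+t. h (t + s) * indicator {0..<1} t \<partial>lborel) = (\<integral>\<^sup>+u. h u * indicator {s..<1+s} u \<partial>lborel)" ..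
  have 2: "(\<integral>\<^sup>+u. h u * indicator {s..<1+s} u \<partial>lborel) = (\<integral>\<^sup>+u. h u * indicator {s..<1} u \<partial>lborel) + (\<integral>\<^sup>+u. h u * indicator {1..<1+s} u \<partial>lborel)"
    using s by (subst nn_integral_add[symmetric]) (auto intro!: nn_integral_cong simp: indicator_def distrib_left[symmetric])
  have "(\<integral>\<^sup>+u. h u * indicator {1..<1+s} u \<partial>lborel) = (\<integral>\<^sup>+t. h (1 + 1 * t) * indicator {1..<1+s} (1 + 1 * t) \<partial>lborel)"
    using nn_integral_real_affine[of "\<lambda>u. h u * indicator {1..<1+s} u" 1 1] by simp
  also have "\<dots> = (\<integral>\<^sup>+t. h t * indicator {0..<s} t \<partial>lborel)"
    using per by (intro nn_integral_cong) (auto simp: indicator_def add.commute)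
  finally have 3: "(\<integral>\<^sup>+u. h u * indicator {1..<1+s} u \<partial>lborel) = (\<integral>\<^sup>+t. h t * indicator {0..<s} t \<partial>lborel)" .
  have 4: "(\<integral>\<^sup>+u. h u * indicator {s..<1} u \<partial>lborel) + (\<integral>\<^sup>+t. h t * indicator {0..<s} t \<partial>lborel) = (\<integral>\<^sup>+t. h t * indicator {0..<1} t \<partial>lborel)"
    using s by (subst nn_integral_add[symmetric]) (auto intro!: nn_integral_cong simp: indicator_def distrib_left[symmetric])
  show ?thesis using 1 2 3 4 by simp
qed

lemma nn_integral_C:
  assumes f[measurable]: "f \<in> borel_measurable circle_measure"
  shows "(\<integral>\<^sup>+z. f z \<partial>circle_measure) = (\<integral>\<^sup>+t. f (cis (2*pi*t)) * indicator {0..<1} t \<partial>lborel)"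
proof -
  have fm: "f \<in> borel_measurable (restrict_space borel (sphere 0 1))"
    using f by (simp add: measurable_cong_sets[OF sets_C refl])
  have "(\<integral>\<^sup>+z. f z \<partial>circle_measure) = (\<integral>\<^sup>+t. f (cis (2*pi*t)) \<partial>restrict_space lborel {0..<1})"
    unfolding circle_measure_def by (intro nn_integral_distr cis_meas) (use fm in simp)
  also have "\<dots> = (\<integral>\<^sup>+t. f (cis (2*pi*t)) * indicator {0..<1} t \<partial>lborel)"
    by (subst nn_integral_restrict_space) (auto intro!: nn_integral_cong simp: indicator_def)
  finally show ?thesis .
qed

lemma unit_cis: assumes "cmod c = 1" obtains s where "0 \<le> s" and "s < 1" and "c = cis (2 * pi * s)"
proof -
  have c0: "c \<noteq> 0" using assms by auto
  have "sgn c = c" using assms by (simp add: sgn_div_norm)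
  then have c: "c = cis (Arg c)" and a: "- pi < Arg c" "Arg c \<le> pi" using Arg_correct[OF c0] by auto
  show ?thesis
  proof (cases "0 \<le> Arg c")
    case True
    show ?thesis by (rule that[of "Arg c / (2*pi)"]) (use True a c in auto)
  next
    case False
    have "cis (2*pi*(Arg c / (2*pi) + 1)) = cis (Arg c + 2*pi)" by (simp add: algebra_simps)
    also have "\<dots> = cis (Arg c)" by (simp add: cis.ctr)
    finally show ?thesis using False a c by (intro that[of "Arg c / (2*pi) + 1"]) (auto simp: field_simps)
  qed
qed

lemma cis_borel: "(\<lambda>t::real. cis (2 * pi * t)) \<in> borel_measurable borel"
proof -
  have "continuous_on UNIV (\<lambda>t::real. cis (2 * pi * t))"
    unfolding cis_conv_exp by (intro continuous_intros)
  then show ?thesis by (simp add: borel_measurable_continuous_onI)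
qed

lemma sets_C_borel: "A \<in> sets circle_measure \<Longrightarrow> A \<in> sets borel"
  unfolding sets_C by (subst (asm) sets_restrict_space_iff) auto

lemma rot_C:
  assumes c: "cmod c = 1"
  shows "distr circle_measure circle_measure (\<lambda>z. c * z) = circle_measure"
proof -
  obtain s where s: "0 \<le> s" "s < 1" "c = cis (2 * pi * s)" using unit_cis[OF c] by blast
  have rm: "(\<lambda>z. c * z) \<in> measurable circle_measure circle_measure"
    using c by (auto simp: measurable_C_iff space_C norm_mult intro!: measurable_from_C measurable_restrict_space1)
  show ?thesis
  proof (rule measure_eqI)
    fix A assume A: "A \<in> sets (distr circle_measure circle_measure (\<lambda>z. c * z))"
    then have A': "A \<in> sets circle_measure" by simp
    have Ab: "A \<in> sets borel" using sets_C_borel[OF A'] .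
    have h: "(\<lambda>t. indicator A (cis (2*pi*t)) :: ennreal) \<in> borel_measurable borel"
      using measurable_compose[OF cis_borel borel_measurable_indicator[OF Ab]] by (simp add: comp_def)
    have "emeasure (distr circle_measure circle_measure (\<lambda>z. c * z)) A = emeasure circle_measure ((\<lambda>z. c * z) -` A \<inter> space circle_measure)"
      using A' rm by (simp add: emeasure_distr)
    also have "\<dots> = (\<integral>\<^sup>+z. indicator A (c * z) \<partial>circle_measure)"
    proof -
      have S: "(\<lambda>z. c * z) -` A \<inter> space circle_measure \<in> sets circle_measure" using measurable_sets[OF rm A'] .
      have "emeasure circle_measure ((\<lambda>z. c * z) -` A \<inter> space circle_measure) = (\<integral>\<^sup>+z. indicator ((\<lambda>z. c * z) -` A \<inter> space circle_measure) z \<partial>circle_measure)"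
        using S by (rule nn_integral_indicator[symmetric])
      also have "\<dots> = (\<integral>\<^sup>+z. indicator A (c * z) \<partial>circle_measure)"
        by (intro nn_integral_cong) (auto simp: indicator_def)
      finally show ?thesis .
    qed
    also have "\<dots> = (\<integral>\<^sup>+t. indicator A (c * cis (2*pi*t)) * indicator {0..<1} t \<partial>lborel)"
      using A' rm by (subst nn_integral_C) auto
    also have "\<dots> = (\<integral>\<^sup>+t. indicator A (cis (2*pi*(t + s))) * indicator {0..<1} t \<partial>lborel)"
      using s by (simp add: cis_mult algebra_simps)
    also have "\<dots> = (\<integral>\<^sup>+t. indicator A (cis (2*pi*t)) * indicator {0..<1} t \<partial>lborel)"
    proof (rule periodic_shift[where h="\<lambda>t. indicator A (cis (2*pi*t))", OF h])
      fix t :: real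
      have e: "2*pi*(t+1) = 2*pi*t + 2*pi" by (simp add: algebra_simps)
      have "cis (2*pi*(t+1)) = cis (2*pi*t)" unfolding e by (simp add: cis.ctr)
      then show "indicator A (cis (2*pi*(t+1))) = (indicator A (cis (2*pi*t)) :: ennreal)" by simp
    qed (use s in auto)
    also have "\<dots> = emeasure circle_measure A"
      using A' by (subst nn_integral_C[symmetric]) auto
    finally show "emeasure (distr circle_measure circle_measure (\<lambda>z. c * z)) A = emeasure circle_measure A" .
  qed simp
qed




abbreviation "CC \<equiv> circle_measure \<Otimes>\<^sub>M circle_measure"

lemma prob_CC: "prob_space CC"
  by (intro prob_space_pair prob_C)

lemma space_CC: "space CC = sphere 0 1 \<times> sphere 0 1"
  by (simp add: space_pair_measure space_C)

lemma rotC_meas: "cmod c = 1 \<Longrightarrow> (\<lambda>z. c * z) \<in> measurable circle_measure circle_measure"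
  by (auto simp: measurable_C_iff space_C norm_mult intro!: measurable_from_C measurable_restrict_space1)

lemma rotCC_meas: "cmod c = 1 \<Longrightarrow> (\<lambda>w. (c * fst w, c * snd w)) \<in> measurable CC CC"
  by (intro measurable_Pair measurable_compose[OF measurable_fst rotC_meas] measurable_compose[OF measurable_snd rotC_meas])

lemma rot_CC:
  assumes c: "cmod c = 1"
  shows "distr CC CC (\<lambda>w. (c * fst w, c * snd w)) = CC"
proof -
  have rm: "(\<lambda>z. c * z) \<in> measurable circle_measure circle_measure"
    using c by (auto simp: measurable_C_iff space_C norm_mult intro!: measurable_from_C measurable_restrict_space1)
  have sf: "sigma_finite_measure (distr circle_measure circle_measure (\<lambda>z. c * z))"
    unfolding rot_C[OF c] using prob_C by (simp add: prob_space_imp_sigma_finite)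
  have "CC = distr circle_measure circle_measure (\<lambda>z. c * z) \<Otimes>\<^sub>M distr circle_measure circle_measure (\<lambda>z. c * z)"
    by (simp add: rot_C[OF c])
  also have "\<dots> = distr CC CC (\<lambda>(x, y). (c * x, c * y))"
    by (rule pair_measure_distr[OF rm rm sf])
  finally show ?thesis by (simp add: case_prod_beta')
qed

lemma skew_rot:
  fixes M :: "'a measure" and c :: "'a \<Rightarrow> complex"
  assumes cm[measurable]: "c \<in> borel_measurable M" and cu: "\<And>v. v \<in> space M \<Longrightarrow> cmod (c v) = 1"
  shows "distr (M \<Otimes>\<^sub>M CC) (M \<Otimes>\<^sub>M CC) (\<lambda>x. (fst x, (c (fst x) * fst (snd x), c (fst x) * snd (snd x)))) = M \<Otimes>\<^sub>M CC"
    (is "distr _ _ ?\<Phi> = _")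
proof -
  interpret P: prob_space CC by (rule prob_CC)
  have Phim: "?\<Phi> \<in> measurable (M \<Otimes>\<^sub>M CC) (M \<Otimes>\<^sub>M CC)"
  proof (rule measurable_Pair)
    show "fst \<in> measurable (M \<Otimes>\<^sub>M CC) M" by simp
    have "(\<lambda>x. c (fst x) * fst (snd x)) \<in> measurable (M \<Otimes>\<^sub>M CC) circle_measure"
      unfolding measurable_C_iff
    proof
      have "(\<lambda>x. fst (snd x)) \<in> measurable (M \<Otimes>\<^sub>M CC) circle_measure" by simp
      then have "(\<lambda>x. fst (snd x)) \<in> borel_measurable (M \<Otimes>\<^sub>M CC)" unfolding measurable_C_iff by simp
      then show "(\<lambda>x. c (fst x) * fst (snd x)) \<in> borel_measurable (M \<Otimes>\<^sub>M CC)" by measurable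
      show "(\<lambda>x. c (fst x) * fst (snd x)) \<in> space (M \<Otimes>\<^sub>M CC) \<rightarrow> sphere 0 1"
        using cu by (auto simp: space_pair_measure space_C norm_mult)
    qed
    moreover have "(\<lambda>x. c (fst x) * snd (snd x)) \<in> measurable (M \<Otimes>\<^sub>M CC) circle_measure"
      unfolding measurable_C_iff
    proof
      have "(\<lambda>x. snd (snd x)) \<in> measurable (M \<Otimes>\<^sub>M CC) circle_measure" by simp
      then have "(\<lambda>x. snd (snd x)) \<in> borel_measurable (M \<Otimes>\<^sub>M CC)" unfolding measurable_C_iff by simp
      then show "(\<lambda>x. c (fst x) * snd (snd x)) \<in> borel_measurable (M \<Otimes>\<^sub>M CC)" by measurable
      show "(\<lambda>x. c (fst x) * snd (snd x)) \<in> space (M \<Otimes>\<^sub>M CC) \<rightarrow> sphere 0 1"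
        using cu by (auto simp: space_pair_measure space_C norm_mult)
    qed
    ultimately show "(\<lambda>x. (c (fst x) * fst (snd x), c (fst x) * snd (snd x))) \<in> measurable (M \<Otimes>\<^sub>M CC) CC"
      by (intro measurable_Pair)
  qed
  show ?thesis
  proof (rule measure_eqI)
    fix A assume "A \<in> sets (distr (M \<Otimes>\<^sub>M CC) (M \<Otimes>\<^sub>M CC) ?\<Phi>)"
    then have A: "A \<in> sets (M \<Otimes>\<^sub>M CC)" by simp
    have B: "?\<Phi> -` A \<inter> space (M \<Otimes>\<^sub>M CC) \<in> sets (M \<Otimes>\<^sub>M CC)" using measurable_sets[OF Phim A] .
    have "emeasure (distr (M \<Otimes>\<^sub>M CC) (M \<Otimes>\<^sub>M CC) ?\<Phi>) A = emeasure (M \<Otimes>\<^sub>M CC) (?\<Phi> -` A \<inter> space (M \<Otimes>\<^sub>M CC))"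
      using A Phim by (simp add: emeasure_distr)
    also have "\<dots> = (\<integral>\<^sup>+v. emeasure CC (Pair v -` (?\<Phi> -` A \<inter> space (M \<Otimes>\<^sub>M CC))) \<partial>M)"
      using B by (rule P.emeasure_pair_measure_alt)
    also have "\<dots> = (\<integral>\<^sup>+v. emeasure CC (Pair v -` A) \<partial>M)"
    proof (intro nn_integral_cong)
      fix v assume v: "v \<in> space M"
      have rm: "(\<lambda>w. (c v * fst w, c v * snd w)) \<in> measurable CC CC"
        using cu[OF v] by (rule rotCC_meas)
      have "Pair v -` (?\<Phi> -` A \<inter> space (M \<Otimes>\<^sub>M CC)) = (\<lambda>w. (c v * fst w, c v * snd w)) -` (Pair v -` A) \<inter> space CC"
        using v by (auto simp: space_pair_measure)
      then have "emeasure CC (Pair v -` (?\<Phi> -` A \<inter> space (M \<Otimes>\<^sub>M CC))) = emeasure (distr CC CC (\<lambda>w. (c v * fst w, c v * snd w))) (Pair v -` A)"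
        using rm A by (simp add: emeasure_distr)
      also have "\<dots> = emeasure CC (Pair v -` A)" by (simp add: rot_CC[OF cu[OF v]])
      finally show "emeasure CC (Pair v -` (?\<Phi> -` A \<inter> space (M \<Otimes>\<^sub>M CC))) = emeasure CC (Pair v -` A)" .
    qed
    also have "\<dots> = emeasure (M \<Otimes>\<^sub>M CC) A"
      using A by (rule P.emeasure_pair_measure_alt[symmetric])
    finally show "emeasure (distr (M \<Otimes>\<^sub>M CC) (M \<Otimes>\<^sub>M CC) ?\<Phi>) A = emeasure (M \<Otimes>\<^sub>M CC) A" .
  qed simp
qed




lemma psf_C: "product_sigma_finite (\<lambda>_::nat. circle_measure)"
  unfolding product_sigma_finite_def using prob_C by (simp add: prob_space_imp_sigma_finite)

lemma prob_PiC: "prob_space (PiM I (\<lambda>_::nat. circle_measure))"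
  by (rule prob_space_PiM) (rule prob_C)

lemma upd_meas:
  fixes I :: "nat set"
  assumes "i \<in> I" "j \<in> I" and f: "f \<in> measurable X (PiM I (\<lambda>_. circle_measure))"
    and a: "a \<in> measurable X circle_measure" and b: "b \<in> measurable X circle_measure"
  shows "(\<lambda>x. (f x)(i := a x, j := b x)) \<in> measurable X (PiM I (\<lambda>_. circle_measure))"
proof -
  have ei: "I = I \<union> {i}" and ej: "I = I \<union> {j}" using assms by auto
  have "(\<lambda>x. (f x)(i := a x)) \<in> measurable X (PiM I (\<lambda>_. circle_measure))"
    by (rule measurable_fun_upd[OF ei f a])
  from measurable_fun_upd[OF ej this b] show ?thesis by simp
qed

lemma swap_measure:
  fixes I :: "nat set"
  assumes I: "finite I" and ij: "i \<in> I" "j \<in> I" "i \<noteq> j"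
  defines "M \<equiv> PiM I (\<lambda>_. circle_measure)"
  shows "distr (M \<Otimes>\<^sub>M CC) (M \<Otimes>\<^sub>M CC)
     (\<lambda>x. ((fst x)(i := fst (snd x), j := snd (snd x)), (fst x i, fst x j))) = M \<Otimes>\<^sub>M CC"
    (is "distr _ _ ?\<Psi> = _")
proof -
  interpret psf: product_sigma_finite "\<lambda>_::nat. circle_measure" by (rule psf_C)
  interpret CCp: prob_space CC by (rule prob_CC)
  interpret Mp: prob_space M unfolding M_def by (rule prob_PiC)
  let ?E1 = "prod_algebra I (\<lambda>_. circle_measure)"
  let ?E2 = "{a \<times> b | a b. a \<in> sets circle_measure \<and> b \<in> sets circle_measure}"
  let ?E = "{a \<times> b | a b. a \<in> ?E1 \<and> b \<in> ?E2}"
  let ?\<Omega> = "space M \<times> space CC"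
  have E1: "?E1 = {(\<Pi>\<^sub>E k\<in>I. A k) |A. A \<in> (\<Pi> k\<in>I. sets circle_measure)}"
    using prod_algebra_eq_finite[OF I] .
  have spM: "space M = (\<Pi>\<^sub>E k\<in>I. sphere 0 1)" unfolding M_def by (simp add: space_PiM space_C)
  have Psim: "?\<Psi> \<in> measurable (M \<Otimes>\<^sub>M CC) (M \<Otimes>\<^sub>M CC)"
  proof (rule measurable_Pair)
    show "(\<lambda>x. (fst x)(i := fst (snd x), j := snd (snd x))) \<in> measurable (M \<Otimes>\<^sub>M CC) M"
      unfolding M_def by (rule upd_meas[OF ij(1,2)]) auto
    show "(\<lambda>x. (fst x i, fst x j)) \<in> measurable (M \<Otimes>\<^sub>M CC) CC"
      unfolding M_def using ij
      by (intro measurable_Pair measurable_compose[OF measurable_fst measurable_component_singleton])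
  qed
  have sets_eq: "sets (M \<Otimes>\<^sub>M CC) = sigma_sets ?\<Omega> ?E"
  proof -
    have "sets (M \<Otimes>\<^sub>M CC) = sets (sigma (space M \<times> space CC) {a \<times> b | a b. a \<in> ?E1 \<and> b \<in> ?E2})"
    proof (rule sets_pair_eq)
      show "?E1 \<subseteq> Pow (space M)" unfolding M_def space_PiM by (rule prod_algebra_sets_into_space)
      show "sets M = sigma_sets (space M) ?E1" unfolding M_def by (simp add: sets_PiM space_PiM)
      show "countable {space M}" by simp
      show "{space M} \<subseteq> ?E1" unfolding M_def space_PiM using space_in_prod_algebra by auto
      show "\<Union>{space M} = space M" by simp
      show "?E2 \<subseteq> Pow (space CC)"
      proof
        fix x assume "x \<in> ?E2"
        then obtain a b where "x = a \<times> b" "a \<in> sets circle_measure" "b \<in> sets circle_measure" by blast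
        then show "x \<in> Pow (space CC)" using sets.sets_into_space by (auto simp: space_pair_measure)
      qed
      show "sets CC = sigma_sets (space CC) ?E2" by (simp add: sets_pair_measure space_pair_measure)
      show "countable {space CC}" by simp
      show "{space CC} \<subseteq> ?E2" by (auto simp: space_pair_measure)
      show "\<Union>{space CC} = space CC" by simp
    qed
    moreover have "?E \<subseteq> Pow ?\<Omega>"
    proof
      fix x assume "x \<in> ?E"
      then obtain a b1 b2 where "x = a \<times> (b1 \<times> b2)" and "a \<in> ?E1" and "b1 \<in> sets circle_measure" and "b2 \<in> sets circle_measure" by blast
      moreover have "a \<subseteq> space M" using \<open>a \<in> ?E1\<close> prod_algebra_sets_into_space[of I "\<lambda>_. circle_measure"]
        unfolding M_def space_PiM by blast
      moreover have "b1 \<subseteq> space circle_measure" "b2 \<subseteq> space circle_measure"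
        using \<open>b1 \<in> sets circle_measure\<close> \<open>b2 \<in> sets circle_measure\<close> sets.sets_into_space by auto
      ultimately show "x \<in> Pow ?\<Omega>" by (auto simp: space_pair_measure)
    qed
    ultimately show ?thesis by simp
  qed
  show ?thesis
  proof (rule measure_eqI_generator_eq[where E="?E" and \<Omega>="?\<Omega>" and A="\<lambda>_. ?\<Omega>"])
    show "Int_stable ?E"
    proof (rule Int_stableI)
      fix a b assume "a \<in> ?E" "b \<in> ?E"
      then obtain a1 a2 b1 b2 where a: "a = a1 \<times> a2" "a1 \<in> ?E1" "a2 \<in> ?E2" and b: "b = b1 \<times> b2" "b1 \<in> ?E1" "b2 \<in> ?E2"
        by blast
      have "a1 \<inter> b1 \<in> ?E1" by (rule Int_stableD[OF Int_stable_prod_algebra a(2) b(2)])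
      moreover have "a2 \<inter> b2 \<in> ?E2" by (rule Int_stableD[OF Int_stable_pair_measure_generator a(3) b(3)])
      ultimately show "a \<inter> b \<in> ?E" using a b by blast
    qed
    show "?E \<subseteq> Pow ?\<Omega>"
    proof
      fix x assume "x \<in> ?E"
      then obtain a b1 b2 where "x = a \<times> (b1 \<times> b2)" and "a \<in> ?E1" and "b1 \<in> sets circle_measure" and "b2 \<in> sets circle_measure" by blast
      moreover have "a \<subseteq> space M" using \<open>a \<in> ?E1\<close> prod_algebra_sets_into_space[of I "\<lambda>_. circle_measure"]
        unfolding M_def space_PiM by blast
      moreover have "b1 \<subseteq> space circle_measure" "b2 \<subseteq> space circle_measure"
        using \<open>b1 \<in> sets circle_measure\<close> \<open>b2 \<in> sets circle_measure\<close> sets.sets_into_space by auto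
      ultimately show "x \<in> Pow ?\<Omega>" by (auto simp: space_pair_measure)
    qed
    show "sets (distr (M \<Otimes>\<^sub>M CC) (M \<Otimes>\<^sub>M CC) ?\<Psi>) = sigma_sets ?\<Omega> ?E" using sets_eq by simp
    show "sets (M \<Otimes>\<^sub>M CC) = sigma_sets ?\<Omega> ?E" by (rule sets_eq)
    show "range (\<lambda>_. ?\<Omega>) \<subseteq> ?E"
      using space_in_prod_algebra[of I "\<lambda>_. circle_measure"] by (auto simp: M_def space_PiM space_pair_measure)
    show "(\<Union>_::nat. ?\<Omega>) = ?\<Omega>" by simp
    show "emeasure (distr (M \<Otimes>\<^sub>M CC) (M \<Otimes>\<^sub>M CC) ?\<Psi>) ?\<Omega> \<noteq> \<infinity>" for n :: nat
    proof -
      interpret X: prob_space "M \<Otimes>\<^sub>M CC" by (intro prob_space_pair Mp.prob_space_axioms CCp.prob_space_axioms)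
      interpret D: prob_space "distr (M \<Otimes>\<^sub>M CC) (M \<Otimes>\<^sub>M CC) ?\<Psi>" by (rule X.prob_space_distr[OF Psim])
      show ?thesis using D.emeasure_finite[of "space M \<times> space CC"] by simp
    qed
    fix X assume "X \<in> ?E"
    then obtain a b where X0: "X = a \<times> b" "a \<in> ?E1" "b \<in> ?E2" by blast
    from X0(2) obtain A where a: "a = (\<Pi>\<^sub>E k\<in>I. A k)" and A: "\<And>k. k \<in> I \<Longrightarrow> A k \<in> sets circle_measure"
      unfolding E1 by blast
    from X0(3) obtain B1 B2 where b: "b = B1 \<times> B2" and B: "B1 \<in> sets circle_measure" "B2 \<in> sets circle_measure"
      by blast
    have X: "X = (\<Pi>\<^sub>E k\<in>I. A k) \<times> (B1 \<times> B2)" using X0 a b by simp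
    interpret Cp: prob_space circle_measure by (rule prob_C)
    define A' where "A' = A(i := B1, j := B2)"
    have A': "\<And>k. k \<in> I \<Longrightarrow> A' k \<in> sets circle_measure" using A B by (simp add: A'_def)
    have Asp: "\<And>k. k \<in> I \<Longrightarrow> A k \<subseteq> sphere 0 1" using A sets.sets_into_space space_C by metis
    have Bsp: "B1 \<subseteq> sphere 0 1" "B2 \<subseteq> sphere 0 1" using B sets.sets_into_space space_C by metis+
    have PiA: "(\<Pi>\<^sub>E k\<in>I. A k) \<in> sets M" unfolding M_def using A by (intro sets_PiM_I_finite I) auto
    have PiA': "(\<Pi>\<^sub>E k\<in>I. A' k) \<in> sets M" unfolding M_def using A' by (intro sets_PiM_I_finite I) auto
    have Xs: "X \<in> sets (M \<Otimes>\<^sub>M CC)" unfolding X using PiA B by auto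
    have pre: "?\<Psi> -` X \<inter> space (M \<Otimes>\<^sub>M CC) = (\<Pi>\<^sub>E k\<in>I. A' k) \<times> (A i \<times> A j)"
    proof (intro set_eqI iffI)
      fix x assume x: "x \<in> ?\<Psi> -` X \<inter> space (M \<Otimes>\<^sub>M CC)"
      obtain v y1 y2 where xe: "x = (v, (y1, y2))" by (cases x) auto
      have v: "v \<in> (\<Pi>\<^sub>E k\<in>I. sphere 0 1)" and y: "y1 \<in> sphere 0 1" "y2 \<in> sphere 0 1"
        using x unfolding xe by (auto simp: space_pair_measure spM space_C)
      have h: "v(i := y1, j := y2) \<in> (\<Pi>\<^sub>E k\<in>I. A k)" "v i \<in> B1" "v j \<in> B2"
        using x unfolding xe X by auto
      have "v \<in> (\<Pi>\<^sub>E k\<in>I. A' k)"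
      proof (rule PiE_I)
        fix k assume k: "k \<in> I"
        show "v k \<in> A' k"
        proof (cases "k = i \<or> k = j")
          case True then show ?thesis using h ij by (auto simp: A'_def)
        next
          case False then have "(v(i := y1, j := y2)) k = v k" by simp
          then show ?thesis using h(1) k False by (auto simp: A'_def PiE_iff)
        qed
      next
        fix k assume "k \<notin> I" then show "v k = undefined" using v by (auto simp: PiE_iff extensional_def)
      qed
      moreover have "y1 \<in> A i" using PiE_mem[OF h(1) ij(1)] ij(3) by simp
      moreover have "y2 \<in> A j" using PiE_mem[OF h(1) ij(2)] by simp
      ultimately show "x \<in> (\<Pi>\<^sub>E k\<in>I. A' k) \<times> (A i \<times> A j)" unfolding xe by simp
    next
      fix x assume x: "x \<in> (\<Pi>\<^sub>E k\<in>I. A' k) \<times> (A i \<times> A j)"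
      obtain v y1 y2 where xe: "x = (v, (y1, y2))" by (cases x) auto
      have v: "v \<in> (\<Pi>\<^sub>E k\<in>I. A' k)" and y: "y1 \<in> A i" "y2 \<in> A j" using x unfolding xe by auto
      have vs: "v \<in> space M" unfolding spM
      proof (rule PiE_I)
        fix k assume k: "k \<in> I"
        then have "v k \<in> A' k" using v by auto
        then show "v k \<in> sphere 0 1" using Asp[OF k] Bsp by (auto simp: A'_def split: if_splits)
      qed (use v in \<open>auto simp: PiE_iff extensional_def\<close>)
      have ys: "(y1, y2) \<in> space CC" using y Asp[OF ij(1)] Asp[OF ij(2)] unfolding space_CC by blast
      have "v(i := y1, j := y2) \<in> (\<Pi>\<^sub>E k\<in>I. A k)"
      proof (rule PiE_I)
        fix k assume k: "k \<in> I"
        show "(v(i := y1, j := y2)) k \<in> A k"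
        proof (cases "k = i \<or> k = j")
          case True then show ?thesis using y ij by auto
        next
          case False then show ?thesis using v k by (auto simp: A'_def PiE_iff)
        qed
      next
        fix k assume "k \<notin> I" then show "(v(i := y1, j := y2)) k = undefined" using v ij by (auto simp: PiE_iff extensional_def)
      qed
      moreover have "v i \<in> B1" using PiE_mem[OF v ij(1)] ij(3) by (simp add: A'_def)
      moreover have "v j \<in> B2" using PiE_mem[OF v ij(2)] by (simp add: A'_def)
      ultimately show "x \<in> ?\<Psi> -` X \<inter> space (M \<Otimes>\<^sub>M CC)" unfolding xe X using vs ys by (simp add: space_pair_measure)
    qed
    have mM: "emeasure M (\<Pi>\<^sub>E k\<in>I. A k) = (\<Prod>k\<in>I. emeasure circle_measure (A k))"
      unfolding M_def using A by (intro psf.emeasure_PiM I) auto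
    have mM': "emeasure M (\<Pi>\<^sub>E k\<in>I. A' k) = (\<Prod>k\<in>I. emeasure circle_measure (A' k))"
      unfolding M_def using A' by (intro psf.emeasure_PiM I) auto
    have p1: "(\<Prod>k\<in>I. emeasure circle_measure (A k)) = emeasure circle_measure (A i) * emeasure circle_measure (A j) * (\<Prod>k\<in>I - {i} - {j}. emeasure circle_measure (A k))"
      using I ij by (simp add: prod.remove[of I i] prod.remove[of "I - {i}" j] mult.assoc)
    have p2: "(\<Prod>k\<in>I. emeasure circle_measure (A' k)) = emeasure circle_measure B1 * emeasure circle_measure B2 * (\<Prod>k\<in>I - {i} - {j}. emeasure circle_measure (A k))"
      using I ij by (simp add: prod.remove[of I i] prod.remove[of "I - {i}" j] mult.assoc A'_def)
    have "emeasure (distr (M \<Otimes>\<^sub>M CC) (M \<Otimes>\<^sub>M CC) ?\<Psi>) X = emeasure (M \<Otimes>\<^sub>M CC) (?\<Psi> -` X \<inter> space (M \<Otimes>\<^sub>M CC))"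
      using Psim Xs by (rule emeasure_distr)
    also have "\<dots> = emeasure M (\<Pi>\<^sub>E k\<in>I. A' k) * (emeasure circle_measure (A i) * emeasure circle_measure (A j))"
      unfolding pre using PiA' A ij by (simp add: CCp.emeasure_pair_measure_Times sigma_finite_measure.emeasure_pair_measure_Times[OF prob_space_imp_sigma_finite[OF prob_C]])
    also have "\<dots> = emeasure M (\<Pi>\<^sub>E k\<in>I. A k) * (emeasure circle_measure B1 * emeasure circle_measure B2)"
      unfolding mM mM' p1 p2 by (simp add: ac_simps)
    also have "\<dots> = emeasure (M \<Otimes>\<^sub>M CC) X"
      unfolding X using PiA B by (simp add: CCp.emeasure_pair_measure_Times sigma_finite_measure.emeasure_pair_measure_Times[OF prob_space_imp_sigma_finite[OF prob_C]])
    finally show "emeasure (distr (M \<Otimes>\<^sub>M CC) (M \<Otimes>\<^sub>M CC) ?\<Psi>) X = emeasure (M \<Otimes>\<^sub>M CC) X" .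
  qed
qed




lemma cdir_unit: "cmod (cdir z) = 1"
  by (simp add: cdir_def norm_divide)

lemma cdir_borel: "cdir \<in> borel_measurable borel"
proof -
  have "(\<lambda>z::complex. if z = 0 then 1 else z / complex_of_real (cmod z)) \<in> borel_measurable borel"
    by measurable
  then show ?thesis unfolding cdir_def[abs_def] .
qed

lemma C_borel: "f \<in> measurable X circle_measure \<Longrightarrow> f \<in> borel_measurable X"
  by (simp add: measurable_C_iff)

lemma mulC:
  assumes "a \<in> measurable X circle_measure" "b \<in> borel_measurable X" "\<And>x. x \<in> space X \<Longrightarrow> cmod (b x) = 1"
  shows "(\<lambda>x. a x * b x) \<in> measurable X circle_measure"
  using assms unfolding measurable_C_iff by (auto simp: norm_mult)

lemma cdir_meas:
  assumes "a \<in> borel_measurable X" "b \<in> borel_measurable X"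
  shows "(\<lambda>x. cdir (a x + b x)) \<in> borel_measurable X" "(\<lambda>x. cnj (cdir (a x + b x))) \<in> borel_measurable X"
proof -
  show 1: "(\<lambda>x. cdir (a x + b x)) \<in> borel_measurable X"
    using measurable_compose[OF _ cdir_borel, of "\<lambda>x. a x + b x"] assms by simp
  show "(\<lambda>x. cnj (cdir (a x + b x))) \<in> borel_measurable X"
    using measurable_compose[OF 1 borel_measurable_continuous_onI[OF continuous_on_cnj[OF continuous_on_id]]] by (simp add: comp_def)
qed

context
  fixes N :: nat and g :: "complex \<Rightarrow> real" and i j :: nat
  assumes ij: "i < j" "j < N"
    and gm: "g \<in> borel_measurable circle_measure"
    and gpos: "\<forall>w\<in>space circle_measure. g w \<ge> 0"
    and gint: "(\<integral>\<^sup>+ w. ennreal (g w) \<partial>circle_measure) = 1"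
begin

abbreviation "TM \<equiv> torus N"
abbreviation "XX \<equiv> TM \<Otimes>\<^sub>M CC"

lemma TM_def': "TM = PiM {..<N} (\<lambda>_. circle_measure)" by (simp add: torus_def)

lemma ij': "i \<in> {..<N}" "j \<in> {..<N}" "i \<noteq> j" using ij by auto

lemma m_fs: "(\<lambda>x. fst (snd x)) \<in> measurable XX circle_measure" by simp
lemma m_ss: "(\<lambda>x. snd (snd x)) \<in> measurable XX circle_measure" by simp
lemma m_ci: "k < N \<Longrightarrow> (\<lambda>x. fst x k) \<in> measurable XX circle_measure"
  unfolding TM_def' by (intro measurable_compose[OF measurable_fst measurable_component_singleton]) auto

lemma m_g: "a \<in> measurable X circle_measure \<Longrightarrow> (\<lambda>x. g (a x)) \<in> borel_measurable X"
  using measurable_compose[OF _ gm] by blast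

definition cv :: "(nat \<Rightarrow> complex) \<Rightarrow> complex" where "cv v = cdir (v i + v j)"

lemma m_cv: "(\<lambda>x. cv (fst x)) \<in> borel_measurable XX"
  unfolding cv_def using cdir_meas(1)[OF C_borel[OF m_ci[OF ij'(1)[simplified]]] C_borel[OF m_ci[OF ij(2)]]] .

lemma prob_TM: "prob_space TM" unfolding TM_def' by (rule prob_PiC)

lemma prob_XX: "prob_space XX" by (intro prob_space_pair prob_TM prob_CC)

lemma prob_Dg: "prob_space (density circle_measure (\<lambda>x. ennreal (g x)))"
proof (rule prob_spaceI)
  have "emeasure (density circle_measure (\<lambda>x. ennreal (g x))) (space circle_measure) = (\<integral>\<^sup>+ x. ennreal (g x) * indicator (space circle_measure) x \<partial>circle_measure)"
    using gm by (intro emeasure_density) auto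
  also have "\<dots> = 1" using gint by (subst nn_integral_cong[where v="\<lambda>x. ennreal (g x)"]) (auto simp: indicator_def)
  finally show "emeasure (density circle_measure (\<lambda>x. ennreal (g x))) (space (density circle_measure (\<lambda>x. ennreal (g x)))) = 1" by simp
qed

lemma cv_TM: "cv \<in> borel_measurable TM"
proof -
  have "(\<lambda>v. v i) \<in> measurable TM circle_measure" "(\<lambda>v. v j) \<in> measurable TM circle_measure"
    unfolding TM_def' using ij by (auto intro!: measurable_component_singleton)
  from cdir_meas(1)[OF C_borel[OF this(1)] C_borel[OF this(2)]] show ?thesis unfolding cv_def[abs_def] .
qed

lemma cv_unit: "cmod (cv v) = 1" unfolding cv_def by (rule cdir_unit)

lemma cnj_cancel: "cmod c = 1 \<Longrightarrow> c * y * cnj c = y"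
proof -
  assume "cmod c = 1"
  then have "c * cnj c = 1" using complex_norm_square[of c] by simp
  then show ?thesis by (metis mult.assoc mult.commute mult.right_neutral)
qed

lemma Phi_meas: "(\<lambda>x. (fst x, (cv (fst x) * fst (snd x), cv (fst x) * snd (snd x)))) \<in> measurable XX XX"
proof (rule measurable_Pair)
  show "fst \<in> measurable XX TM" by simp
  have c: "(\<lambda>x. cv (fst x)) \<in> borel_measurable XX" by (rule m_cv)
  have "(\<lambda>x. fst (snd x) * cv (fst x)) \<in> measurable XX circle_measure"
    by (rule mulC[OF m_fs c cv_unit])
  moreover have "(\<lambda>x. snd (snd x) * cv (fst x)) \<in> measurable XX circle_measure"
    by (rule mulC[OF m_ss c cv_unit])
  ultimately show "(\<lambda>x. (cv (fst x) * fst (snd x), cv (fst x) * snd (snd x))) \<in> measurable XX CC"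
    by (simp add: mult.commute)
qed

lemma Psi_meas: "(\<lambda>x. ((fst x)(i := fst (snd x), j := snd (snd x)), (fst x i, fst x j))) \<in> measurable XX XX"
proof (rule measurable_Pair)
  show "(\<lambda>x. (fst x)(i := fst (snd x), j := snd (snd x))) \<in> measurable XX TM"
    unfolding TM_def' by (rule upd_meas[OF ij'(1,2)]) auto
  show "(\<lambda>x. (fst x i, fst x j)) \<in> measurable XX CC"
    using ij by (intro measurable_Pair m_ci) auto
qed

lemma Phi_distr: "distr XX XX (\<lambda>x. (fst x, (cv (fst x) * fst (snd x), cv (fst x) * snd (snd x)))) = XX"
  by (rule skew_rot[OF cv_TM cv_unit])

lemma Psi_distr: "distr XX XX (\<lambda>x. ((fst x)(i := fst (snd x), j := snd (snd x)), (fst x i, fst x j))) = XX"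
  unfolding TM_def' by (rule swap_measure) (use ij in auto)

lemma dom_int: "integrable XX (\<lambda>x. g (fst (snd x)) * g (snd (snd x)))"
proof -
  interpret Cp: prob_space circle_measure by (rule prob_C)
  interpret CCp: prob_space CC by (rule prob_CC)
  interpret Tp: prob_space TM by (rule prob_TM)
  have gmC: "(\<lambda>x. ennreal (g x)) \<in> borel_measurable circle_measure" using gm by simp
  have Gm: "(\<lambda>w. g (fst w) * g (snd w)) \<in> borel_measurable CC"
    using gm by (intro borel_measurable_times measurable_compose[OF measurable_fst gm] measurable_compose[OF measurable_snd gm])
  have "(\<integral>\<^sup>+ w. ennreal (norm (g (fst w) * g (snd w))) \<partial>CC) = (\<integral>\<^sup>+ w. ennreal (g (fst w)) * ennreal (g (snd w)) \<partial>CC)"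
    using gpos by (intro nn_integral_cong) (auto simp: space_pair_measure ennreal_mult abs_mult)
  also have "\<dots> = (\<integral>\<^sup>+ a. \<integral>\<^sup>+ b. ennreal (g a) * ennreal (g b) \<partial>circle_measure \<partial>circle_measure)"
  proof -
    have fm: "(\<lambda>w. ennreal (g (fst w)) * ennreal (g (snd w))) \<in> borel_measurable CC"
      using gmC by (intro borel_measurable_times_ennreal measurable_compose[OF measurable_fst gmC] measurable_compose[OF measurable_snd gmC])
    show ?thesis using Cp.nn_integral_fst[OF fm] by simp
  qed
  also have "\<dots> = (\<integral>\<^sup>+ a. ennreal (g a) * 1 \<partial>circle_measure)"
    using gmC gint by (simp add: nn_integral_cmult)
  also have "\<dots> = 1" using gint by simp
  finally have G1: "(\<integral>\<^sup>+ w. ennreal (norm (g (fst w) * g (snd w))) \<partial>CC) = 1" .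
  have "(\<integral>\<^sup>+ x. ennreal (norm (g (fst (snd x)) * g (snd (snd x)))) \<partial>XX) = (\<integral>\<^sup>+ v. \<integral>\<^sup>+ w. ennreal (norm (g (fst w) * g (snd w))) \<partial>CC \<partial>TM)"
    using Gm by (subst CCp.nn_integral_fst[symmetric]) (auto intro: measurable_compose[OF measurable_snd])
  also have "\<dots> = 1" using G1 Tp.emeasure_space_1 by simp
  finally have "(\<integral>\<^sup>+ x. ennreal (norm (g (fst (snd x)) * g (snd (snd x)))) \<partial>XX) < \<infinity>" by simp
  moreover have "(\<lambda>x. g (fst (snd x)) * g (snd (snd x))) \<in> borel_measurable XX"
    using measurable_compose[OF measurable_snd Gm, of TM] by (simp add: comp_def)
  ultimately show ?thesis by (simp add: integrable_iff_bounded)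
qed

lemma pair_main:
  fixes \<phi> F :: "(nat \<Rightarrow> complex) \<Rightarrow> real"
  assumes \<phi>m: "\<phi> \<in> borel_measurable TM" and Fm: "F \<in> borel_measurable TM"
    and \<phi>b: "\<forall>v\<in>space TM. \<bar>\<phi> v\<bar> \<le> B1" and Fb: "\<forall>v\<in>space TM. \<bar>F v\<bar> \<le> B2"
  defines "A \<equiv> \<lambda>v. \<integral>w. \<phi> (v(i := fst w * cdir (v i + v j), j := snd w * cdir (v i + v j)))
      \<partial>(density circle_measure (\<lambda>x. ennreal (g x)) \<Otimes>\<^sub>M density circle_measure (\<lambda>x. ennreal (g x)))"
  shows "integrable TM (\<lambda>v. A v * F v) \<and> integrable TM (\<lambda>v. \<phi> v * Qstar_pair g i j F v)
    \<and> (\<integral>v. A v * F v \<partial>TM) = (\<integral>v. \<phi> v * Qstar_pair g i j F v \<partial>TM)"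
proof -
  interpret Cp: prob_space circle_measure by (rule prob_C)
  interpret CCp: prob_space CC by (rule prob_CC)
  interpret Tp: prob_space TM by (rule prob_TM)
  interpret TC: pair_sigma_finite TM CC by unfold_locales
  define h1 where "h1 x = F (fst x) * \<phi> ((fst x)(i := fst (snd x) * cv (fst x), j := snd (snd x) * cv (fst x))) * (g (fst (snd x)) * g (snd (snd x)))" for x
  define h2 where "h2 x = F (fst x) * \<phi> ((fst x)(i := fst (snd x), j := snd (snd x))) * (g (fst (snd x) * cnj (cv (fst x))) * g (snd (snd x) * cnj (cv (fst x))))" for x
  define h3 where "h3 x = \<phi> (fst x) * (F ((fst x)(i := fst (snd x), j := snd (snd x))) * g (fst x i * cnj (cdir (fst (snd x) + snd (snd x)))) * g (fst x j * cnj (cdir (fst (snd x) + snd (snd x)))))" for x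
  define \<Phi> where "\<Phi> x = (fst x, (cv (fst x) * fst (snd x), cv (fst x) * snd (snd x)))" for x :: "(nat \<Rightarrow> complex) \<times> complex \<times> complex"
  define \<Psi> where "\<Psi> x = ((fst x)(i := fst (snd x), j := snd (snd x)), (fst x i, fst x j))" for x :: "(nat \<Rightarrow> complex) \<times> complex \<times> complex"
  have \<Phi>m: "\<Phi> \<in> measurable XX XX" unfolding \<Phi>_def[abs_def] by (rule Phi_meas)
  have \<Psi>m: "\<Psi> \<in> measurable XX XX" unfolding \<Psi>_def[abs_def] by (rule Psi_meas)
  have \<Phi>d: "distr XX XX \<Phi> = XX" unfolding \<Phi>_def[abs_def] by (rule Phi_distr)
  have \<Psi>d: "distr XX XX \<Psi> = XX" unfolding \<Psi>_def[abs_def] by (rule Psi_distr)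
  have cvm: "(\<lambda>x. cv (fst x)) \<in> borel_measurable XX" by (rule m_cv)
  have ccvm: "(\<lambda>x. cnj (cv (fst x))) \<in> borel_measurable XX"
    using measurable_compose[OF cvm borel_measurable_continuous_onI[OF continuous_on_cnj[OF continuous_on_id]]] by (simp add: comp_def)
  have T1m: "(\<lambda>x. (fst x)(i := fst (snd x) * cv (fst x), j := snd (snd x) * cv (fst x))) \<in> measurable XX TM"
  proof -
    have a1: "(\<lambda>x. fst (snd x) * cv (fst x)) \<in> measurable XX circle_measure" by (rule mulC[OF m_fs cvm cv_unit])
    have a2: "(\<lambda>x. snd (snd x) * cv (fst x)) \<in> measurable XX circle_measure" by (rule mulC[OF m_ss cvm cv_unit])
    have f: "fst \<in> measurable XX (PiM {..<N} (\<lambda>_. circle_measure))" by (simp add: torus_def)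
    show ?thesis using upd_meas[OF ij'(1,2) f a1 a2] by (simp add: torus_def)
  qed
  have T2m: "(\<lambda>x. (fst x)(i := fst (snd x), j := snd (snd x))) \<in> measurable XX TM"
    unfolding TM_def' by (rule upd_meas[OF ij'(1,2)]) auto
  have h1m: "h1 \<in> borel_measurable XX"
    unfolding h1_def[abs_def]
    by (intro borel_measurable_times measurable_compose[OF measurable_fst Fm] measurable_compose[OF T1m \<phi>m] m_g m_fs m_ss)
  have h2m: "h2 \<in> borel_measurable XX"
    unfolding h2_def[abs_def]
    by (intro borel_measurable_times measurable_compose[OF measurable_fst Fm] measurable_compose[OF T2m \<phi>m] m_g
        mulC[OF m_fs ccvm] mulC[OF m_ss ccvm]) (simp_all add: cv_unit)
  have h3m: "h3 \<in> borel_measurable XX"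
  proof -
    have cm: "(\<lambda>x. cnj (cdir (fst (snd x) + snd (snd x)))) \<in> borel_measurable XX"
      by (rule cdir_meas(2)[OF C_borel[OF m_fs] C_borel[OF m_ss]])
    show ?thesis unfolding h3_def[abs_def]
      by (intro borel_measurable_times measurable_compose[OF measurable_fst \<phi>m] measurable_compose[OF T2m Fm] m_g
        mulC[OF m_ci cm] ) (use ij in \<open>simp_all add: cdir_unit\<close>)
  qed
  have e12: "h1 x = h2 (\<Phi> x)" for x
  proof -
    have c1: "cv (fst x) * fst (snd x) * cnj (cv (fst x)) = fst (snd x)" by (rule cnj_cancel[OF cv_unit])
    have c2: "cv (fst x) * snd (snd x) * cnj (cv (fst x)) = snd (snd x)" by (rule cnj_cancel[OF cv_unit])
    have c3: "(fst x)(i := cv (fst x) * fst (snd x), j := cv (fst x) * snd (snd x)) = (fst x)(i := fst (snd x) * cv (fst x), j := snd (snd x) * cv (fst x))"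
      by (simp add: mult.commute)
    show ?thesis unfolding h1_def h2_def \<Phi>_def fst_conv snd_conv c1 c2 c3 ..
  qed
  have e23: "h2 x = h3 (\<Psi> x)" for x
  proof -
    obtain v y1 y2 where x: "x = (v, (y1, y2))" by (cases x) auto
    have u: "(v(i := y1, j := y2))(i := v i, j := v j) = v" by (rule ext) auto
    show ?thesis using ij'(3) unfolding x by (simp add: h2_def h3_def \<Psi>_def u cv_def)
  qed

  have dom: "integrable XX (\<lambda>x. \<bar>B1 * B2\<bar> * (g (fst (snd x)) * g (snd (snd x))))"
    using dom_int by simp
  have h1int: "integrable XX h1"
  proof (rule Bochner_Integration.integrable_bound[OF dom h1m])
    show "AE x in XX. norm (h1 x) \<le> norm (\<bar>B1 * B2\<bar> * (g (fst (snd x)) * g (snd (snd x))))"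
    proof (rule AE_I2)
      fix x assume x: "x \<in> space XX"
      have v: "fst x \<in> space TM" using x by (auto simp: space_pair_measure)
      have y: "fst (snd x) \<in> space circle_measure" "snd (snd x) \<in> space circle_measure" using x by (auto simp: space_pair_measure)
      have t: "(fst x)(i := fst (snd x) * cv (fst x), j := snd (snd x) * cv (fst x)) \<in> space TM"
        using measurable_space[OF T1m x] by simp
      define a where "a = F (fst x)"
      define b where "b = \<phi> ((fst x)(i := fst (snd x) * cv (fst x), j := snd (snd x) * cv (fst x)))"
      define G where "G = g (fst (snd x)) * g (snd (snd x))"
      have a: "\<bar>a\<bar> \<le> B2" using Fb v by (simp add: a_def)
      have b: "\<bar>b\<bar> \<le> B1" using \<phi>b t by (simp add: b_def)
      have G: "0 \<le> G" using gpos y by (simp add: G_def)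
      have "\<bar>a * b\<bar> \<le> B2 * B1" unfolding abs_mult by (rule mult_mono[OF a b]) (use a b in auto)
      then have "\<bar>a * b\<bar> \<le> \<bar>B1 * B2\<bar>" by (simp add: mult.commute)
      then have "\<bar>a * b\<bar> * G \<le> \<bar>B1 * B2\<bar> * G" using G by (rule mult_right_mono)
      then show "norm (h1 x) \<le> norm (\<bar>B1 * B2\<bar> * (g (fst (snd x)) * g (snd (snd x))))"
        using G by (simp add: h1_def a_def[symmetric] b_def[symmetric] G_def[symmetric] abs_mult)
    qed
  qed
  have h1e: "h1 = (\<lambda>x. h2 (\<Phi> x))" by (rule ext) (rule e12)
  have h2e: "h2 = (\<lambda>x. h3 (\<Psi> x))" by (rule ext) (rule e23)
  have h2int: "integrable XX h2"
    using integrable_distr_eq[OF \<Phi>m h2m] h1int unfolding \<Phi>d h1e by simp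
  have h3int: "integrable XX h3"
    using integrable_distr_eq[OF \<Psi>m h3m] h2int unfolding \<Psi>d h2e by simp
  have i12: "integral\<^sup>L XX h1 = integral\<^sup>L XX h2"
    using integral_distr[OF \<Phi>m h2m] unfolding \<Phi>d h1e by simp
  have i23: "integral\<^sup>L XX h2 = integral\<^sup>L XX h3"
    using integral_distr[OF \<Psi>m h3m] unfolding \<Psi>d h2e by simp
  have gmC: "(\<lambda>x. ennreal (g x)) \<in> borel_measurable circle_measure" using gm by simp
  interpret Dp: prob_space "density circle_measure (\<lambda>x. ennreal (g x))" by (rule prob_Dg)
  have Gm: "(\<lambda>w. g (fst w) * g (snd w)) \<in> borel_measurable CC"
    using gm by (intro borel_measurable_times measurable_compose[OF measurable_fst gm] measurable_compose[OF measurable_snd gm])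
  have DD: "density circle_measure (\<lambda>x. ennreal (g x)) \<Otimes>\<^sub>M density circle_measure (\<lambda>x. ennreal (g x))
      = density CC (\<lambda>w. ennreal (g (fst w) * g (snd w)))"
  proof -
    have "density circle_measure (\<lambda>x. ennreal (g x)) \<Otimes>\<^sub>M density circle_measure (\<lambda>x. ennreal (g x))
      = density CC (\<lambda>(x, y). ennreal (g x) * ennreal (g y))"
      by (rule pair_measure_density[OF gmC gmC]) (simp_all add: Cp.sigma_finite_measure_axioms Dp.sigma_finite_measure_axioms)
    also have "\<dots> = density CC (\<lambda>w. ennreal (g (fst w) * g (snd w)))"
    proof (rule density_cong)
      show "(\<lambda>(x, y). ennreal (g x) * ennreal (g y)) \<in> borel_measurable CC"
        using gmC by (simp add: case_prod_beta')
      show "(\<lambda>w. ennreal (g (fst w) * g (snd w))) \<in> borel_measurable CC" using Gm by simp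
      show "AE x in CC. (case x of (x, y) \<Rightarrow> ennreal (g x) * ennreal (g y)) = ennreal (g (fst x) * g (snd x))"
        using gpos by (intro AE_I2) (auto simp: space_pair_measure ennreal_mult)
    qed
    finally show ?thesis .
  qed
  have LHSpt: "A v * F v = (\<integral>w. h1 (v, w) \<partial>CC)" if v: "v \<in> space TM" for v
  proof -
    have pm: "(\<lambda>x. \<phi> ((fst x)(i := fst (snd x) * cv (fst x), j := snd (snd x) * cv (fst x)))) \<in> borel_measurable XX"
      by (rule measurable_compose[OF T1m \<phi>m])
    have fm: "(\<lambda>w. \<phi> (v(i := fst w * cdir (v i + v j), j := snd w * cdir (v i + v j)))) \<in> borel_measurable CC"
      using measurable_compose[OF measurable_Pair1'[OF v] pm] by (simp add: comp_def cv_def)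
    have "A v = (\<integral>w. (g (fst w) * g (snd w)) *\<^sub>R \<phi> (v(i := fst w * cdir (v i + v j), j := snd w * cdir (v i + v j))) \<partial>CC)"
      unfolding A_def DD
      by (rule integral_density[OF fm Gm]) (use gpos in \<open>auto intro!: AE_I2 simp: space_pair_measure\<close>)
    then have "A v * F v = (\<integral>w. (g (fst w) * g (snd w)) * \<phi> (v(i := fst w * cdir (v i + v j), j := snd w * cdir (v i + v j))) * F v \<partial>CC)"
      by simp
    also have "\<dots> = (\<integral>w. h1 (v, w) \<partial>CC)"
      by (intro Bochner_Integration.integral_cong) (simp_all add: h1_def cv_def)
    finally show ?thesis .
  qed
  have RHSpt: "\<phi> v * Qstar_pair g i j F v = (\<integral>y. h3 (v, y) \<partial>CC)" for v
    unfolding Qstar_pair_def h3_def by simp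
  have int1: "integrable TM (\<lambda>v. A v * F v)"
    using TC.integrable_fst'[OF h1int] by (subst Bochner_Integration.integrable_cong[OF refl LHSpt]) auto
  have int3: "integrable TM (\<lambda>v. \<phi> v * Qstar_pair g i j F v)"
    using TC.integrable_fst'[OF h3int] by (simp add: RHSpt)
  have "(\<integral>v. A v * F v \<partial>TM) = (\<integral>v. (\<integral>w. h1 (v, w) \<partial>CC) \<partial>TM)"
    by (intro Bochner_Integration.integral_cong refl LHSpt)
  also have "\<dots> = integral\<^sup>L XX h1" by (rule TC.integral_fst'[OF h1int])
  also have "\<dots> = integral\<^sup>L XX h3" using i12 i23 by simp
  also have "\<dots> = (\<integral>v. (\<integral>w. h3 (v, w) \<partial>CC) \<partial>TM)" by (rule TC.integral_fst'[OF h3int, symmetric])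
  also have "\<dots> = (\<integral>v. \<phi> v * Qstar_pair g i j F v \<partial>TM)" by (simp add: RHSpt)
  finally show ?thesis using int1 int3 by simp
qed

end



lemma card_pairs: "card (pairs N) = N choose 2"
proof (induction N)
  case 0
  then show ?case by (simp add: pairs_def)
next
  case (Suc N)
  have e: "pairs (Suc N) = pairs N \<union> (\<lambda>i. (i, N)) ` {..<N}"
    by (auto simp: pairs_def less_Suc_eq)
  have fin: "finite (pairs N)"
    by (rule finite_subset[of _ "{..<N} \<times> {..<N}"]) (auto simp: pairs_def)
  have d: "pairs N \<inter> (\<lambda>i. (i, N)) ` {..<N} = {}" by (auto simp: pairs_def)
  have "card (pairs (Suc N)) = card (pairs N) + card ((\<lambda>i. (i, N)) ` {..<N})"
    unfolding e by (rule card_Un_disjoint[OF fin _ d]) simp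
  also have "card ((\<lambda>i. (i, N)) ` {..<N}) = N" by (subst card_image) (auto simp: inj_on_def)
  moreover have "Suc N choose 2 = N + (N choose 2)" using binomial_Suc_Suc[of N 1] by (simp add: numeral_2_eq_2)
  ultimately show ?case using Suc by simp
qed

lemma finite_pairs: "finite (pairs N)"
  by (rule finite_subset[of _ "{..<N} \<times> {..<N}"]) (auto simp: pairs_def)

theorem mainTheorem1:
  fixes N :: nat and g :: "complex \<Rightarrow> real"
  assumes "N \<ge> 2"
    and "g \<in> borel_measurable circle_measure"
    and "\<forall>w\<in>space circle_measure. g w \<ge> 0"
    and "(\<integral>\<^sup>+ w. ennreal (g w) \<partial>circle_measure) = 1"
    and "\<forall>w\<in>space circle_measure. g w = g (cnj w)"
  defines "Qs \<equiv> (\<lambda>F v. (1 / real (N choose 2)) * (\<Sum>(i, j)\<in>pairs N. Qstar_pair g i j F v))"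
  shows "is_adjoint_on (torus N) (BDG_Q N g) Qs
    \<and> (\<forall>F v. master_generator N Qs F v
          = real N / real (N choose 2) * (\<Sum>(i, j)\<in>pairs N. Qstar_pair g i j F v - F v))"
proof
  have cpos: "real (N choose 2) \<noteq> 0" using assms(1) by simp
  show "\<forall>F v. master_generator N Qs F v
          = real N / real (N choose 2) * (\<Sum>(i, j)\<in>pairs N. Qstar_pair g i j F v - F v)"
  proof (intro allI)
    fix F :: "(nat \<Rightarrow> complex) \<Rightarrow> real" and v
    define S where "S = (\<Sum>(i, j)\<in>pairs N. Qstar_pair g i j F v)"
    have "(\<Sum>(i, j)\<in>pairs N. Qstar_pair g i j F v - F v) = (\<Sum>p\<in>pairs N. Qstar_pair g (fst p) (snd p) F v - F v)"
      by (simp add: case_prod_beta)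
    also have "\<dots> = (\<Sum>p\<in>pairs N. Qstar_pair g (fst p) (snd p) F v) - (\<Sum>p\<in>pairs N. F v)"
      by (rule sum_subtractf)
    also have "\<dots> = S - real (N choose 2) * F v"
      by (simp add: S_def case_prod_beta card_pairs)
    finally have e: "(\<Sum>(i, j)\<in>pairs N. Qstar_pair g i j F v - F v) = S - real (N choose 2) * F v" .
    have "master_generator N Qs F v = real N * ((1 / real (N choose 2)) * S - F v)"
      by (simp add: master_generator_def Qs_def S_def)
    also have "\<dots> = real N / real (N choose 2) * (S - real (N choose 2) * F v)"
      using cpos by (simp add: field_simps)
    finally show "master_generator N Qs F v = real N / real (N choose 2) * (\<Sum>(i, j)\<in>pairs N. Qstar_pair g i j F v - F v)"
      unfolding e .
  qed
  show "is_adjoint_on (torus N) (BDG_Q N g) Qs"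
    unfolding is_adjoint_on_def
  proof (intro allI impI)
    fix \<phi> F :: "(nat \<Rightarrow> complex) \<Rightarrow> real"
    assume \<phi>m: "\<phi> \<in> borel_measurable (torus N)" and Fm: "F \<in> borel_measurable (torus N)"
      and "\<exists>B. \<forall>v\<in>space (torus N). \<bar>\<phi> v\<bar> \<le> B" and "\<exists>B. \<forall>v\<in>space (torus N). \<bar>F v\<bar> \<le> B"
    then obtain B1 B2 where \<phi>b: "\<forall>v\<in>space (torus N). \<bar>\<phi> v\<bar> \<le> B1" and Fb: "\<forall>v\<in>space (torus N). \<bar>F v\<bar> \<le> B2" by blast
    define A where "A p v = (\<integral>w. \<phi> (v(fst p := fst w * cdir (v (fst p) + v (snd p)), snd p := snd w * cdir (v (fst p) + v (snd p))))
      \<partial>(density circle_measure (\<lambda>x. ennreal (g x)) \<Otimes>\<^sub>M density circle_measure (\<lambda>x. ennreal (g x))))" for p v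
    have PM: "integrable (torus N) (\<lambda>v. A p v * F v) \<and> integrable (torus N) (\<lambda>v. \<phi> v * Qstar_pair g (fst p) (snd p) F v)
      \<and> (\<integral>v. A p v * F v \<partial>torus N) = (\<integral>v. \<phi> v * Qstar_pair g (fst p) (snd p) F v \<partial>torus N)" if p: "p \<in> pairs N" for p
      unfolding A_def
      by (rule pair_main[OF _ _ assms(2-4) \<phi>m Fm \<phi>b Fb]) (use p in \<open>auto simp: pairs_def\<close>)
    have L: "BDG_Q N g \<phi> v * F v = (1 / real (N choose 2)) * (\<Sum>p\<in>pairs N. A p v * F v)" for v
      unfolding BDG_Q_def A_def by (simp add: case_prod_unfold sum_distrib_right)
    have R: "\<phi> v * Qs F v = (1 / real (N choose 2)) * (\<Sum>p\<in>pairs N. \<phi> v * Qstar_pair g (fst p) (snd p) F v)" for v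
      unfolding Qs_def by (simp add: case_prod_unfold sum_distrib_left)
    have "(\<integral>v. BDG_Q N g \<phi> v * F v \<partial>torus N) = (1 / real (N choose 2)) * (\<Sum>p\<in>pairs N. \<integral>v. A p v * F v \<partial>torus N)"
      unfolding L using PM by (simp add: integral_sum)
    also have "\<dots> = (1 / real (N choose 2)) * (\<Sum>p\<in>pairs N. \<integral>v. \<phi> v * Qstar_pair g (fst p) (snd p) F v \<partial>torus N)"
      using PM by simp
    also have "\<dots> = (\<integral>v. \<phi> v * Qs F v \<partial>torus N)"
      unfolding R using PM by (simp add: integral_sum)
    finally show "(\<integral>v. BDG_Q N g \<phi> v * F v \<partial>torus N) = (\<integral>v. \<phi> v * Qs F v \<partial>torus N)" .
  qed
qed

end
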